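(* Let $\mathbf{a}$ be a CSCA and $n\in\mathbb{N}$. Then $\mathbf{a}$ possesses gliders with eigenvalues $u^n$ and $u^{-n}$ (i.e. there exist non-zero $\xi,\eta\in\mathcal{P}^2$ with $\mathbf{a}\xi=u^n\xi$ and $\mathbf{a}\eta=u^{-n}\eta$) if and only if $\mathrm{tr}\,\mathbf{a}=u^{-n}+u^n$.
   Context: $\mathcal{P}$ denotes the ring of Laurent polynomials in $u$ over $\mathbb{Z}_2$; $\mathcal{R}$ is the subring of palindromes ($p(u^{-1})=p(u)$). A CSCA (centered symplectic cellular automaton) is a $2\times2$ matrix with entries in $\mathcal{R}$ and determinant $1$, acting on $\mathcal{P}^2$ by matrix multiplication. *)

theory Defs
  imports "HOL-Analysis.Analysis" "HOL-Library.Poly_Mapping" "HOL-Library.Z2"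
begin

text \<open>Laurent polynomials in u over Z_2: finitely supported maps int => Z_2
  with convolution product (the group ring Z_2[Z]).\<close>
type_synonym laurent = "int \<Rightarrow>\<^sub>0 bit"

definition u :: laurent where "u = Poly_Mapping.single 1 1"
definition u_inv :: laurent where "u_inv = Poly_Mapping.single (-1) 1"

definition palindrome :: "laurent \<Rightarrow> bool" where
  "palindrome p \<longleftrightarrow> (\<forall>k. Poly_Mapping.lookup p (-k) = Poly_Mapping.lookup p k)"

definition CSCA :: "laurent^2^2 \<Rightarrow> bool" where
  "CSCA A \<longleftrightarrow> (\<forall>i j. palindrome (A $ i $ j)) \<and> det A = 1"

end

theory Submission
  imports Defs
begin

lemma u_uinv: "u * u_inv = 1"
  by (simp add: u_def u_inv_def mult_single one_poly_mapping_def)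

lemma eig_fwd:
  fixes A :: "'a::idom^2^2"
  assumes det: "det A = 1" and lm: "l * m = 1"
    and xi: "xi \<noteq> 0" and ev: "A *v xi = l *s xi"
  shows "trace A = m + l"
proof -
  define a where "a = A$1$1"
  define b where "b = A$1$2"
  define c where "c = A$2$1"
  define d where "d = A$2$2"
  define x where "x = xi$1"
  define y where "y = xi$2"
  have e1: "a*x + b*y = l*x" using ev[THEN arg_cong[where f="\<lambda>v. v$1"]]
    by (simp add: matrix_vector_mult_def sum_2 a_def b_def x_def y_def)
  have e2: "c*x + d*y = l*y" using ev[THEN arg_cong[where f="\<lambda>v. v$2"]]
    by (simp add: matrix_vector_mult_def sum_2 c_def d_def x_def y_def)
  have dt: "a*d - b*c = 1" using det by (simp add: det_2 a_def b_def c_def d_def)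
  define D where "D = (a-l)*(d-l) - b*c"
  have Dx: "D*x = 0"
  proof -
    have "(a-l)*x = - (b*y)" using e1 by (simp add: algebra_simps)
    have "(d-l)*y = -(c*x)" using e2 by (simp add: algebra_simps)
    have "D*x = (d-l)*((a-l)*x) - b*c*x" by (simp add: D_def algebra_simps)
    also have "\<dots> = (d-l)*(- (b*y)) - b*c*x" using \<open>(a-l)*x = - (b*y)\<close> by (simp only:)
    also have "\<dots> = - b*((d-l)*y + c*x)" by (simp add: algebra_simps)
    also have "\<dots> = 0" using \<open>(d-l)*y = -(c*x)\<close> by simp
    finally show ?thesis .
  qed
  have Dy: "D*y = 0"
  proof -
    have "(a-l)*x = - (b*y)" using e1 by (simp add: algebra_simps)
    have "(d-l)*y = -(c*x)" using e2 by (simp add: algebra_simps)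
    have "D*y = (a-l)*((d-l)*y) - b*c*y" by (simp add: D_def algebra_simps)
    also have "\<dots> = (a-l)*(-(c*x)) - b*c*y" using \<open>(d-l)*y = -(c*x)\<close> by (simp only:)
    also have "\<dots> = - c*((a-l)*x + b*y)" by (simp add: algebra_simps)
    also have "\<dots> = 0" using \<open>(a-l)*x = - (b*y)\<close> by simp
    finally show ?thesis .
  qed
  have "x \<noteq> 0 \<or> y \<noteq> 0" using xi by (auto simp: vec_eq_iff forall_2 x_def y_def)
  hence D0: "D = 0" using Dx Dy by auto
  have "D = l*l - (a+d)*l + 1" using dt by (simp add: D_def algebra_simps)
  hence "(a+d)*l = l*l + 1" using D0 by (simp add: algebra_simps)
  hence "(a+d)*l*m = l*l*m + m" by (simp add: algebra_simps)
  hence "a+d = l + m" using lm by (simp add: algebra_simps)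
  thus ?thesis by (simp add: trace_def sum_2 a_def d_def)
qed

lemma eig_bwd:
  fixes A :: "'a::comm_ring_1^2^2"
  assumes det: "det A = 1" and lm: "l * m = 1"
    and tr: "trace A = m + l"
  shows "\<exists>xi. xi \<noteq> 0 \<and> A *v xi = l *s xi"
proof -
  define a where "a = A$1$1"
  define b where "b = A$1$2"
  define c where "c = A$2$1"
  define d where "d = A$2$2"
  have dt: "a*d - b*c = 1" using det by (simp add: det_2 a_def b_def c_def d_def)
  have t: "a+d = l+m" using tr by (simp add: trace_def sum_2 a_def d_def)
  have D: "(a-l)*(d-l) - b*c = 0"
  proof -
    have "(a-l)*(d-l) - b*c = (a*d - b*c) - (a+d)*l + l*l" by (simp add: algebra_simps)
    also have "\<dots> = 1 - (l+m)*l + l*l" using dt t by simp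
    also have "\<dots> = 0" using lm by (simp add: algebra_simps)
    finally show ?thesis .
  qed
  have Ae: "\<And>w. A *v w = (vector [a*w$1 + b*w$2, c*w$1 + d*w$2] :: 'a^2)"
    by (simp add: vec_eq_iff forall_2 matrix_vector_mult_def sum_2 a_def b_def c_def d_def)
  have se: "\<And>w. l *s w = (vector [l*w$1, l*w$2] :: 'a^2)"
    by (simp add: vec_eq_iff forall_2)
  show ?thesis
  proof (cases "b = 0 \<and> a = l")
    case False
    define xi :: "'a^2" where "xi = vector [b, l - a]"
    have "xi \<noteq> 0" using False by (auto simp: xi_def vec_eq_iff forall_2)
    moreover have "A *v xi = l *s xi"
      unfolding Ae se using D by (simp add: xi_def vec_eq_iff forall_2 algebra_simps)
    ultimately show ?thesis by blast
  next
    case T1: True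
    show ?thesis
    proof (cases "c = 0 \<and> d = l")
      case False
      define xi :: "'a^2" where "xi = vector [l - d, c]"
      have "xi \<noteq> 0" using False by (auto simp: xi_def vec_eq_iff forall_2)
      moreover have "A *v xi = l *s xi"
        unfolding Ae se using D by (simp add: xi_def vec_eq_iff forall_2 algebra_simps)
      ultimately show ?thesis by blast
    next
      case True
      define xi :: "'a^2" where "xi = vector [1, 0]"
      have "xi \<noteq> 0" by (auto simp: xi_def vec_eq_iff forall_2)
      moreover have "A *v xi = l *s xi"
        unfolding Ae se using T1 True by (simp add: xi_def vec_eq_iff forall_2)
      ultimately show ?thesis by blast
    qed
  qed
qed

theorem mainTheorem3:
  fixes A :: "laurent^2^2" and n :: nat
  assumes "CSCA A"
  shows "((\<exists>\<xi>::laurent^2. \<xi> \<noteq> 0 \<and> A *v \<xi> = (u ^ n) *s \<xi>) \<and>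
          (\<exists>\<eta>::laurent^2. \<eta> \<noteq> 0 \<and> A *v \<eta> = (u_inv ^ n) *s \<eta>))
         \<longleftrightarrow> trace A = u_inv ^ n + u ^ n"
proof -
  have det: "det A = 1" using assms by (simp add: CSCA_def)
  have lm: "u ^ n * u_inv ^ n = 1" by (simp add: u_uinv flip: power_mult_distrib)
  have ml: "u_inv ^ n * u ^ n = 1" using lm by (simp add: mult.commute)
  show ?thesis
  proof
    assume "(\<exists>\<xi>::laurent^2. \<xi> \<noteq> 0 \<and> A *v \<xi> = (u ^ n) *s \<xi>) \<and>
          (\<exists>\<eta>::laurent^2. \<eta> \<noteq> 0 \<and> A *v \<eta> = (u_inv ^ n) *s \<eta>)"
    then obtain xi where "xi \<noteq> 0" "A *v xi = (u ^ n) *s xi" by blast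
    thus "trace A = u_inv ^ n + u ^ n" using eig_fwd[OF det lm] by blast
  next
    assume tr: "trace A = u_inv ^ n + u ^ n"
    have tr2: "trace A = u ^ n + u_inv ^ n" using tr by (simp add: add.commute)
    show "(\<exists>\<xi>::laurent^2. \<xi> \<noteq> 0 \<and> A *v \<xi> = (u ^ n) *s \<xi>) \<and>
          (\<exists>\<eta>::laurent^2. \<eta> \<noteq> 0 \<and> A *v \<eta> = (u_inv ^ n) *s \<eta>)"
      using eig_bwd[OF det lm tr] eig_bwd[OF det ml tr2] by blast
  qed
qed

end
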